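(* For all $n,p\in\mathbb{N}$ and all $f,g\in\mathsf{RegBeh}(n,p+n)$, $d^{n,p}(f^\dagger,g^\dagger)\le d^{n,p+n}(f,g)$.
   Context: Fix variables $V=\{v_1,v_2,\dots\}$ and letters $\Sigma$. Expressions $\mathsf{Exp}::=0\mid v\mid a.e\mid e+f\mid\mu v.e$ with operational prechart: $a.e\xrightarrow{a}e$; $v\rhd v$; $e+f$ has the transitions and outputs of $e$ and of $f$; $\mu w.e\rhd v$ if $e\rhd v$, $v\ne w$; $\mu v.e\xrightarrow{a}e'[\mu v.e/v]$ if $e\xrightarrow{a}e'$. Bisimilarity $\sim$ is a congruence for all operations and capture-avoiding substitution; $\mathsf{Exp}/{\sim}$ is a prechart via $[e]\xrightarrow{a}[e']$ iff $e\xrightarrow{a}e'$, $[e]\rhd v$ iff $e\rhd v$. $\mathsf{bd}$ is the behavioural distance on $\mathsf{Exp}/{\sim}$: the least fixpoint, among 1-bounded pseudometrics ordered pointwise, of $d\mapsto\big((x,y)\mapsto\mathcal H(d^\uparrow)(\beta(x),\beta(y))\big)$, where $\beta(x)$ is the finite set of pairs $(a,x')$ with $x\xrightarrow{a}x'$ together with the variables output by $x$; $d^\uparrow((a,x),(a,y))=\tfrac12 d(x,y)$, $d^\uparrow(m,n)=0$ if $m=n$, $1$ otherwise; $\mathcal H(d)(A,B)=\max\{\sup_{x\in A}\inf_{y\in B}d(x,y),\sup_{y\in B}\inf_{x\in A}d(y,x)\}$, $\sup\emptyset=0$, $\inf\emptyset=1$. $\Omega(n)$: elements of $\mathsf{Exp}/{\sim}$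 with all live variables in $\{v_1,\dots,v_n\}$. $\mathsf{RegBeh}(m,n)$: $m$-tuples of elements of $\Omega(n)$, with $d^{m,n}(f,g)=\max_i\mathsf{bd}(f_i,g_i)$ ($0$ if $m=0$). $\mathrm{id}_n=(v_1,\dots,v_n)$; $f;g=(f_1[\vec g/(v_1,\dots,v_n)],\dots)$ (simultaneous substitution); $\langle f,g\rangle$ is concatenation of tuples. Dagger: for $f\in\mathsf{RegBeh}(0,p)$, $f^\dagger$ is the empty tuple; for $f\in\mathsf{RegBeh}(1,p+1)$, $f^\dagger=\mu v_{p+1}.f\in\mathsf{RegBeh}(1,p)$; for $n+1$ components it is defined inductively by the scalar pairing identity $\langle f,g\rangle^\dagger=\langle f^\dagger;\langle\mathrm{id}_p,h^\dagger\rangle,h^\dagger\rangle$ for $f\in\mathsf{RegBeh}(n,p+1+n)$, $g\in\mathsf{RegBeh}(1,p+1+n)$, where $f^\dagger\in\mathsf{RegBeh}(n,p+1)$ and $h=g;\langle\mathrm{id}_{p+1},f^\dagger\rangle\in\mathsf{RegBeh}(1,p+1)$. *)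

theory Defs
  imports Complex_Main
begin

text \<open>Variable v_(i+1) is represented as the natural number i, so v_1 = 0, v_2 = 1, ...
  Letters are elements of an arbitrary type 'a.\<close>

datatype 'a exp = Zero | Var nat | Pre 'a "'a exp" | Plus "'a exp" "'a exp" | Mu nat "'a exp"

primrec fv :: "'a exp \<Rightarrow> nat set" where
  "fv Zero = {}"
| "fv (Var v) = {v}"
| "fv (Pre a e) = fv e"
| "fv (Plus e f) = fv e \<union> fv f"
| "fv (Mu w e) = fv e - {w}"

definition fresh :: "nat set \<Rightarrow> nat" where
  "fresh S = (if S = {} then 0 else Suc (Max S))"

primrec ssubst :: "(nat \<Rightarrow> 'a exp) \<Rightarrow> 'a exp \<Rightarrow> 'a exp" where
  "ssubst \<sigma> Zero = Zero"
| "ssubst \<sigma> (Var v) = \<sigma> v"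
| "ssubst \<sigma> (Pre a e) = Pre a (ssubst \<sigma> e)"
| "ssubst \<sigma> (Plus e f) = Plus (ssubst \<sigma> e) (ssubst \<sigma> f)"
| "ssubst \<sigma> (Mu w e) =
     (let z = fresh (\<Union>u\<in>fv (Mu w e). fv (\<sigma> u)) in Mu z (ssubst (\<sigma>(w := Var z)) e))"

definition subst1 :: "'a exp \<Rightarrow> nat \<Rightarrow> 'a exp \<Rightarrow> 'a exp" where
  "subst1 e v t = ssubst (Var(v := t)) e"

inductive trans :: "'a exp \<Rightarrow> 'a \<Rightarrow> 'a exp \<Rightarrow> bool" where
  tPre: "trans (Pre a e) a e"
| tPlusL: "trans e a e' \<Longrightarrow> trans (Plus e f) a e'"
| tPlusR: "trans f a f' \<Longrightarrow> trans (Plus e f) a f'"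
| tMu: "trans e a e' \<Longrightarrow> trans (Mu v e) a (subst1 e' v (Mu v e))"

inductive outp :: "'a exp \<Rightarrow> nat \<Rightarrow> bool" where
  oVar: "outp (Var v) v"
| oPlusL: "outp e v \<Longrightarrow> outp (Plus e f) v"
| oPlusR: "outp f v \<Longrightarrow> outp (Plus e f) v"
| oMu: "outp e v \<Longrightarrow> v \<noteq> w \<Longrightarrow> outp (Mu w e) v"

definition bisim :: "('a exp \<Rightarrow> 'a exp \<Rightarrow> bool) \<Rightarrow> bool" where
  "bisim R \<longleftrightarrow> (\<forall>e f. R e f \<longrightarrow>
      (\<forall>v. outp e v \<longleftrightarrow> outp f v) \<and>
      (\<forall>a e'. trans e a e' \<longrightarrow> (\<exists>f'. trans f a f' \<and> R e' f')) \<and>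
      (\<forall>a f'. trans f a f' \<longrightarrow> (\<exists>e'. trans e a e' \<and> R e' f')))"

definition bisimilar :: "'a exp \<Rightarrow> 'a exp \<Rightarrow> bool" where
  "bisimilar e f \<longleftrightarrow> (\<exists>R. bisim R \<and> R e f)"

lemma bisim_conv: "bisim R \<Longrightarrow> bisim (conversep R)"
  unfolding bisim_def conversep_iff by blast

lemma bisim_comp:
  assumes R: "bisim R" and S: "bisim S"
  shows "bisim (R OO S)"
  unfolding bisim_def
proof (intro allI impI)
  fix e g assume "(R OO S) e g"
  then obtain f where ef: "R e f" and fg: "S f g" by blast
  have R1: "\<forall>v. outp e v \<longleftrightarrow> outp f v"
    and R2: "\<forall>a e'. trans e a e' \<longrightarrow> (\<exists>f'. trans f a f' \<and> R e' f')"
    and R3: "\<forall>a f'. trans f a f' \<longrightarrow> (\<exists>e'. trans e a e' \<and> R e' f')"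
    using R ef unfolding bisim_def by blast+
  have S1: "\<forall>v. outp f v \<longleftrightarrow> outp g v"
    and S2: "\<forall>a e'. trans f a e' \<longrightarrow> (\<exists>f'. trans g a f' \<and> S e' f')"
    and S3: "\<forall>a f'. trans g a f' \<longrightarrow> (\<exists>e'. trans f a e' \<and> S e' f')"
    using S fg unfolding bisim_def by blast+
  show "(\<forall>v. outp e v \<longleftrightarrow> outp g v) \<and>
      (\<forall>a e'. trans e a e' \<longrightarrow> (\<exists>f'. trans g a f' \<and> (R OO S) e' f')) \<and>
      (\<forall>a f'. trans g a f' \<longrightarrow> (\<exists>e'. trans e a e' \<and> (R OO S) e' f'))"
  proof (intro conjI allI impI)
    fix v show "outp e v \<longleftrightarrow> outp g v" using R1 S1 by blast
  next
    fix a e' assume "trans e a e'"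
    then obtain f' where "trans f a f'" "R e' f'" using R2 by blast
    then obtain g' where "trans g a g'" "S f' g'" using S2 by blast
    then show "\<exists>g'. trans g a g' \<and> (R OO S) e' g'" using \<open>R e' f'\<close> by blast
  next
    fix a g' assume "trans g a g'"
    then obtain f' where "trans f a f'" "S f' g'" using S3 by blast
    then obtain e' where "trans e a e'" "R e' f'" using R3 by blast
    then show "\<exists>e'. trans e a e' \<and> (R OO S) e' g'" using \<open>S f' g'\<close> by blast
  qed
qed

lemma bisim_eq: "bisim (=)"
  unfolding bisim_def by blast

lemma bisimilar_equivp: "equivp bisimilar"
proof (rule equivpI)
  show "reflp bisimilar"
    unfolding reflp_def bisimilar_def using bisim_eq by blast
  show "symp bisimilar"
    unfolding symp_def bisimilar_def using bisim_conv conversep_iff by metis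
  show "transp bisimilar"
    unfolding transp_def bisimilar_def using bisim_comp relcompp.relcompI by metis
qed

quotient_type 'a beh = "'a exp" / bisimilar
  by (rule bisimilar_equivp)

definition btrans :: "'a beh \<Rightarrow> 'a \<Rightarrow> 'a beh \<Rightarrow> bool" where
  "btrans x a y \<longleftrightarrow> (\<exists>e e'. x = abs_beh e \<and> y = abs_beh e' \<and> trans e a e')"

definition boutp :: "'a beh \<Rightarrow> nat \<Rightarrow> bool" where
  "boutp x v \<longleftrightarrow> (\<exists>e. x = abs_beh e \<and> outp e v)"

definition beta :: "'a beh \<Rightarrow> (('a \<times> 'a beh) + nat) set" where
  "beta x = {Inl (a, y) | a y. btrans x a y} \<union> {Inr v | v. boutp x v}"

definition supz :: "'b set \<Rightarrow> ('b \<Rightarrow> real) \<Rightarrow> real" where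
  "supz A f = (if A = {} then 0 else Sup (f ` A))"

definition infz :: "'b set \<Rightarrow> ('b \<Rightarrow> real) \<Rightarrow> real" where
  "infz A f = (if A = {} then 1 else Inf (f ` A))"

definition hausdorff :: "('b \<Rightarrow> 'b \<Rightarrow> real) \<Rightarrow> 'b set \<Rightarrow> 'b set \<Rightarrow> real" where
  "hausdorff d A B = max (supz A (\<lambda>x. infz B (\<lambda>y. d x y))) (supz B (\<lambda>y. infz A (\<lambda>x. d y x)))"

fun lift_d :: "('a beh \<Rightarrow> 'a beh \<Rightarrow> real) \<Rightarrow> (('a \<times> 'a beh) + nat) \<Rightarrow> (('a \<times> 'a beh) + nat) \<Rightarrow> real" where
  "lift_d d (Inl (a, x)) (Inl (b, y)) = (if a = b then d x y / 2 else 1)"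
| "lift_d d (Inr m) (Inr n) = (if m = n then 0 else 1)"
| "lift_d d _ _ = 1"

definition Phi :: "('a beh \<Rightarrow> 'a beh \<Rightarrow> real) \<Rightarrow> 'a beh \<Rightarrow> 'a beh \<Rightarrow> real" where
  "Phi d x y = hausdorff (lift_d d) (beta x) (beta y)"

definition pmetric1 :: "('b \<Rightarrow> 'b \<Rightarrow> real) \<Rightarrow> bool" where
  "pmetric1 d \<longleftrightarrow> (\<forall>x. d x x = 0) \<and> (\<forall>x y. d x y = d y x) \<and>
     (\<forall>x y z. d x z \<le> d x y + d y z) \<and> (\<forall>x y. 0 \<le> d x y \<and> d x y \<le> 1)"

definition bd :: "'a beh \<Rightarrow> 'a beh \<Rightarrow> real" where
  "bd = (THE d. pmetric1 d \<and> Phi d = d \<and>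
           (\<forall>d'. pmetric1 d' \<and> Phi d' = d' \<longrightarrow> (\<forall>x y. d x y \<le> d' x y)))"

definition breach :: "'a beh \<Rightarrow> 'a beh \<Rightarrow> bool" where
  "breach = (\<lambda>x y. \<exists>a. btrans x a y)\<^sup>*\<^sup>*"

text \<open>Omega n: behaviours all of whose live variables (variables output by some reachable state)
  lie in {v_1, ..., v_n}, i.e. have index < n.\<close>
definition Omega :: "nat \<Rightarrow> 'a beh set" where
  "Omega n = {x. \<forall>y v. breach x y \<and> boutp y v \<longrightarrow> v < n}"

text \<open>RegBeh(m,n), represented by tuples (lists) of representative expressions.\<close>
definition RegBeh :: "nat \<Rightarrow> nat \<Rightarrow> 'a exp list set" where
  "RegBeh m n = {fs. length fs = m \<and> (\<forall>e\<in>set fs. abs_beh e \<in> Omega n)}"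

definition dRB :: "nat \<Rightarrow> nat \<Rightarrow> 'a exp list \<Rightarrow> 'a exp list \<Rightarrow> real" where
  "dRB m n f g = Max (insert 0 ((\<lambda>i. bd (abs_beh (f ! i)) (abs_beh (g ! i))) ` {..<m}))"

definition idt :: "nat \<Rightarrow> 'a exp list" where
  "idt n = map Var [0..<n]"

definition seqc :: "'a exp list \<Rightarrow> 'a exp list \<Rightarrow> 'a exp list" where
  "seqc f g = map (ssubst (\<lambda>j. if j < length g then g ! j else Var j)) f"

text \<open>Dagger with p parameters: f in RegBeh(n, p+n) gives f-dagger in RegBeh(n, p).
  Defined by the scalar pairing identity, splitting off the last component.\<close>
primrec dagger_rev :: "nat \<Rightarrow> 'a exp list \<Rightarrow> 'a exp list" where
  "dagger_rev p [] = []"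
| "dagger_rev p (g # rf) =
     (let fd = dagger_rev (Suc p) rf;
          h = seqc [g] (idt (Suc p) @ fd);
          hd' = [Mu p (hd h)]
      in seqc fd (idt p @ hd') @ hd')"

text \<open>For fs = <f, g> with g the last component: dagger p fs = dagger_rev p (rev fs),
  where rev fs = g # rev f, so the recursive call computes f-dagger with p+1 parameters.\<close>
definition dagger :: "nat \<Rightarrow> 'a exp list \<Rightarrow> 'a exp list" where
  "dagger p fs = dagger_rev p (rev fs)"

end

theory Submission
  imports Defs "HOL-Library.FSet"
begin


lemma trans_simps:
  "trans Zero a t \<longleftrightarrow> False"
  "trans (Var v) a t \<longleftrightarrow> False"
  "trans (Pre b e) a t \<longleftrightarrow> a = b \<and> t = e"
  "trans (Plus e f) a t \<longleftrightarrow> trans e a t \<or> trans f a t"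
  "trans (Mu v e) a t \<longleftrightarrow> (\<exists>e'. trans e a e' \<and> t = subst1 e' v (Mu v e))"
  by (auto intro: trans.intros elim: trans.cases)

lemma outp_simps:
  "outp Zero u \<longleftrightarrow> False"
  "outp (Var v) u \<longleftrightarrow> u = v"
  "outp (Pre b e) u \<longleftrightarrow> False"
  "outp (Plus e f) u \<longleftrightarrow> outp e u \<or> outp f u"
  "outp (Mu v e) u \<longleftrightarrow> outp e u \<and> u \<noteq> v"
  by (auto intro: outp.intros elim: outp.cases)

lemma finite_fv: "finite (fv e)"
  by (induction e) auto

lemma fresh_notin: "finite S \<Longrightarrow> fresh S \<notin> S"
proof
  assume f: "finite S" and m: "fresh S \<in> S"
  then have "S \<noteq> {}" by auto
  then have "fresh S = Suc (Max S)" by (simp add: fresh_def)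
  moreover have "fresh S \<le> Max S" using Max_ge[OF f m] .
  ultimately show False by simp
qed

lemma fv_ssubst: "fv (ssubst \<sigma> e) = (\<Union>u\<in>fv e. fv (\<sigma> u))"
proof (induction e arbitrary: \<sigma>)
  case (Mu w e)
  define z where "z = fresh (\<Union>u\<in>fv (Mu w e). fv (\<sigma> u))"
  have fin: "finite (\<Union>u\<in>fv (Mu w e). fv (\<sigma> u))"
    using finite_fv by (simp add: finite_fv)
  have zn: "z \<notin> (\<Union>u\<in>fv (Mu w e). fv (\<sigma> u))"
    unfolding z_def by (rule fresh_notin[OF fin])
  have "fv (ssubst \<sigma> (Mu w e)) = fv (ssubst (\<sigma>(w := Var z)) e) - {z}"
    by (simp add: z_def Let_def)
  also have "\<dots> = (\<Union>u\<in>fv e. fv ((\<sigma>(w := Var z)) u)) - {z}"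
    using Mu by simp
  also have "\<dots> = (\<Union>u\<in>fv (Mu w e). fv (\<sigma> u))"
    using zn by (auto split: if_splits)
  finally show ?case .
qed auto

lemma outp_fv: "outp e v \<Longrightarrow> v \<in> fv e"
  by (induction rule: outp.induct) auto

lemma trans_fv: "trans e a e' \<Longrightarrow> fv e' \<subseteq> fv e"
proof (induction rule: trans.induct)
  case (tMu e a e' v)
  then show ?case unfolding subst1_def by (auto simp: fv_ssubst split: if_splits)
qed auto

lemma finite_trans: "finite {(a, t). trans e a t}"
proof (induction e)
  case Zero then show ?case by (simp add: trans_simps)
next
  case (Var x) then show ?case by (simp add: trans_simps)
next
  case (Pre b e)
  have "{(a, t). trans (Pre b e) a t} = {(b, e)}" by (auto simp: trans_simps)
  then show ?case by simp
next
  case (Plus e f)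
  have "{(a, t). trans (Plus e f) a t} = {(a, t). trans e a t} \<union> {(a, t). trans f a t}"
    by (auto simp: trans_simps)
  then show ?case using Plus by simp
next
  case (Mu v e)
  have "{(a, t). trans (Mu v e) a t} = (\<lambda>(a, e'). (a, subst1 e' v (Mu v e))) ` {(a, t). trans e a t}"
    by (auto simp: trans_simps)
  then show ?case using Mu by simp
qed

lemma finite_outp: "finite {v. outp e v}"
proof -
  have "{v. outp e v} \<subseteq> fv e" using outp_fv by auto
  then show ?thesis using finite_fv finite_subset by blast
qed



datatype 'a tr = Nd (touts: "nat fset") (tkids: "('a \<times> 'a tr) fset")

lemma tr_eqI: "fset (touts T) = fset (touts T') \<Longrightarrow> fset (tkids T) = fset (tkids T') \<Longrightarrow> T = T'"
  by (cases T; cases T') (simp add: fset_inject)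

primrec trunc :: "nat \<Rightarrow> 'a tr \<Rightarrow> 'a tr" where
  "trunc 0 T = Nd {||} {||}"
| "trunc (Suc k) T = Nd (touts T) ((\<lambda>(a, C). (a, trunc k C)) |`| tkids T)"

primrec tsub :: "nat \<Rightarrow> 'a tr \<Rightarrow> (nat \<Rightarrow> 'a tr) \<Rightarrow> 'a tr" where
  "tsub 0 T \<rho> = Nd {||} {||}"
| "tsub (Suc k) T \<rho> = Nd (ffUnion ((\<lambda>u. touts (\<rho> u)) |`| touts T))
     (((\<lambda>(a, C). (a, tsub k C (\<lambda>u. trunc k (\<rho> u)))) |`| tkids T) |\<union>|
      ffUnion ((\<lambda>u. (\<lambda>(a, D). (a, trunc k D)) |`| tkids (\<rho> u)) |`| touts T))"

primrec tvars :: "nat \<Rightarrow> 'a tr \<Rightarrow> nat set" where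
  "tvars 0 T = {}"
| "tvars (Suc k) T = fset (touts T) \<union> (\<Union>x\<in>fset (tkids T). tvars k (snd x))"

primrec obs :: "nat \<Rightarrow> 'a exp \<Rightarrow> 'a tr" where
  "obs 0 e = Nd {||} {||}"
| "obs (Suc k) e = Nd (Abs_fset {v. outp e v}) (Abs_fset ((\<lambda>(a, e'). (a, obs k e')) ` {(a, e'). trans e a e'}))"

lemma obs_outs: "fset (touts (obs (Suc k) e)) = {v. outp e v}"
proof -
  have "finite {v. outp e v}" by (rule finite_outp)
  then show ?thesis by (simp add: Abs_fset_inverse)
qed

lemma obs_kids: "fset (tkids (obs (Suc k) e)) = (\<lambda>(a, e'). (a, obs k e')) ` {(a, e'). trans e a e'}"
proof -
  have "finite ((\<lambda>(a, e'). (a, obs k e')) ` {(a, e'). trans e a e'})" using finite_trans[of e] by (rule finite_imageI)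
  then show ?thesis by (simp add: Abs_fset_inverse)
qed

lemma tsub_outs: "fset (touts (tsub (Suc k) T \<rho>)) = (\<Union>u\<in>fset (touts T). fset (touts (\<rho> u)))"
  by (simp add: ffUnion.rep_eq)

lemma tsub_kids: "fset (tkids (tsub (Suc k) T \<rho>)) =
   (\<lambda>(a, C). (a, tsub k C (\<lambda>u. trunc k (\<rho> u)))) ` fset (tkids T) \<union>
   (\<Union>u\<in>fset (touts T). (\<lambda>(a, D). (a, trunc k D)) ` fset (tkids (\<rho> u)))"
  by (simp add: ffUnion.rep_eq)

lemma trunc_outs[simp]: "fset (touts (trunc (Suc k) T)) = fset (touts T)" by (simp add: trunc.simps)
lemma trunc_kids: "fset (tkids (trunc (Suc k) T)) = (\<lambda>(a, C). (a, trunc k C)) ` fset (tkids T)" by (simp add: trunc.simps)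

lemma trunc0_outs[simp]: "fset (touts (trunc 0 T)) = {}" by simp
lemma trunc0_kids[simp]: "fset (tkids (trunc 0 T)) = {}" by simp
lemma tsub0_outs[simp]: "fset (touts (tsub 0 T r)) = {}" by simp
lemma tsub0_kids[simp]: "fset (tkids (tsub 0 T r)) = {}" by simp
lemma obs0_outs[simp]: "fset (touts (obs 0 e)) = {}" by simp
lemma obs0_kids[simp]: "fset (tkids (obs 0 e)) = {}" by simp

declare trunc.simps(2)[simp del] tsub.simps(2)[simp del] obs.simps(2)[simp del]

lemma tr_eqI2: "fset (touts T) = fset (touts T') \<Longrightarrow> (\<And>a X. (a, X) \<in> fset (tkids T) \<longleftrightarrow> (a, X) \<in> fset (tkids T')) \<Longrightarrow> T = T'"
  by (rule tr_eqI) auto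

lemma mem_trunc_kids[simp]: "(a, X) \<in> fset (tkids (trunc (Suc k) T)) \<longleftrightarrow> (\<exists>C. (a, C) \<in> fset (tkids T) \<and> X = trunc k C)"
  unfolding trunc_kids by force

lemma mem_tsub_kids[simp]: "(a, X) \<in> fset (tkids (tsub (Suc k) T \<rho>)) \<longleftrightarrow>
   (\<exists>C. (a, C) \<in> fset (tkids T) \<and> X = tsub k C (\<lambda>u. trunc k (\<rho> u))) \<or>
   (\<exists>u D. u \<in> fset (touts T) \<and> (a, D) \<in> fset (tkids (\<rho> u)) \<and> X = trunc k D)"
  unfolding tsub_kids by force

lemma mem_obs_kids: "(a, X) \<in> fset (tkids (obs (Suc k) e)) \<longleftrightarrow> (\<exists>e'. trans e a e' \<and> X = obs k e')"
  unfolding obs_kids by force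

declare obs_outs[simp] tsub_outs[simp]



lemma trunc_trunc[simp]: "k \<le> m \<Longrightarrow> trunc k (trunc m T) = trunc k T"
proof (induction k arbitrary: m T)
  case 0 then show ?case by simp
next
  case (Suc k)
  then obtain m' where m: "m = Suc m'" "k \<le> m'" by (cases m) auto
  show ?case using Suc.IH[OF m(2)] by (intro tr_eqI2) (auto simp: m)
qed

lemma trunc_idem[simp]: "trunc k (trunc k T) = trunc k T" by simp
lemma trunc_Suc_idem[simp]: "trunc k (trunc (Suc k) T) = trunc k T" by simp

lemma trunc_obs[simp]: "k \<le> m \<Longrightarrow> trunc k (obs m e) = obs k e"
proof (induction k arbitrary: m e)
  case 0 then show ?case by simp
next
  case (Suc k)
  then obtain m' where m: "m = Suc m'" "k \<le> m'" by (cases m) auto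
  show ?case
    by (rule tr_eqI2) (auto simp: m Suc.IH[OF m(2)] mem_obs_kids)
qed

lemma tsub_trunc_env[simp]: "tsub k T (\<lambda>u. trunc k (\<rho> u)) = tsub k T \<rho>"
proof (induction k arbitrary: T \<rho>)
  case (Suc k)
  show ?case
    apply (rule tr_eqI2)
     apply simp
    apply simp
    apply (rule iffI; elim disjE exE conjE; (metis trunc_idem)?)
    done
qed simp

lemma tsub_trunc_env2: "k \<le> m \<Longrightarrow> tsub k T (\<lambda>u. trunc m (\<rho> u)) = tsub k T \<rho>"
proof -
  assume km: "k \<le> m"
  have "tsub k T (\<lambda>u. trunc m (\<rho> u)) = tsub k T (\<lambda>u. trunc k (trunc m (\<rho> u)))"
    by (rule tsub_trunc_env[symmetric])
  also have "\<dots> = tsub k T (\<lambda>u. trunc k (\<rho> u))" using km by simp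
  also have "\<dots> = tsub k T \<rho>" by simp
  finally show ?thesis .
qed

lemma tsub_trunc_tree[simp]: "tsub k (trunc k T) \<rho> = tsub k T \<rho>"
proof (induction k arbitrary: T \<rho>)
  case (Suc k)
  show ?case
    apply (rule tr_eqI2)
     apply simp
    apply (simp add: Suc.IH)
    apply (rule iffI; elim disjE exE conjE; (metis Suc.IH)?)
    done
qed simp

lemma trunc_tsub[simp]: "k \<le> m \<Longrightarrow> trunc k (tsub m T \<rho>) = tsub k T \<rho>"
proof (induction k arbitrary: m T \<rho>)
  case 0 then show ?case by simp
next
  case (Suc k)
  then obtain m' where m: "m = Suc m'" "k \<le> m'" by (cases m) auto
  show ?case
    apply (rule tr_eqI2)
     apply (simp add: m)
    apply (simp add: m Suc.IH[OF m(2)] tsub_trunc_env2[OF m(2)] m(2))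
    apply (rule iffI; elim disjE exE conjE; (metis Suc.IH[OF m(2)] tsub_trunc_env2[OF m(2)] trunc_trunc m(2))?)
    done
qed

lemma tsub_agree: "(\<forall>u\<in>tvars k T. \<rho> u = \<rho>' u) \<Longrightarrow> tsub k T \<rho> = tsub k T \<rho>'"
proof (induction k arbitrary: T \<rho> \<rho>')
  case (Suc k)
  have o: "fset (touts (tsub (Suc k) T \<rho>)) = fset (touts (tsub (Suc k) T \<rho>'))"
    using Suc.prems by auto
  have i: "tsub k C (\<lambda>u. trunc k (\<rho> u)) = tsub k C (\<lambda>u. trunc k (\<rho>' u))" if "(a, C) \<in> fset (tkids T)" for a C
    using that Suc.prems by (intro Suc.IH) force
  have r: "\<rho> u = \<rho>' u" if "u \<in> fset (touts T)" for u using that Suc.prems by auto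
  show ?case
  proof (rule tr_eqI2[OF o])
    fix a X
    show "(a, X) \<in> fset (tkids (tsub (Suc k) T \<rho>)) \<longleftrightarrow> (a, X) \<in> fset (tkids (tsub (Suc k) T \<rho>'))"
      using i r by simp metis
  qed
qed simp

lemma tsub_id: "tsub k T (\<lambda>u. obs k (Var u)) = trunc k T"
proof (induction k arbitrary: T)
  case (Suc k)
  have e: "(\<lambda>u. trunc k (obs (Suc k) (Var u))) = (\<lambda>u. obs k (Var u))"
    by auto
  have e2: "tsub k C (\<lambda>u. obs (Suc k) (Var u)) = trunc k C" for C :: "'a tr"
    using Suc.IH[of C] tsub_trunc_env[of k C "\<lambda>u. obs (Suc k) (Var u)"] by simp
  show ?case
    apply (rule tr_eqI2)
     apply (simp add: outp_simps)
    apply (simp add: outp_simps trans_simps Suc.IH mem_obs_kids)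
    done
qed simp

lemma tsub_var: "tsub k (obs k (Var v)) \<rho> = trunc k (\<rho> v)"
proof (cases k)
  case (Suc k')
  show ?thesis
    by (rule tr_eqI2) (auto simp: Suc outp_simps trans_simps mem_obs_kids)
qed simp

lemma tvars_kid: "(a, C) \<in> fset (tkids T) \<Longrightarrow> tvars k C \<subseteq> tvars (Suc k) T"
  by force

lemma tvars_obs: "tvars k (obs k e) \<subseteq> fv e"
proof (induction k arbitrary: e)
  case (Suc k)
  show ?case using Suc.IH trans_fv outp_fv by (fastforce simp: obs_kids)
qed simp


lemma tsub_comp: "tsub k (tsub k T \<rho>1) \<rho>2 = tsub k T (\<lambda>u. tsub k (\<rho>1 u) \<rho>2)"
proof (induction k arbitrary: T \<rho>1 \<rho>2)
  case (Suc k)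
  show ?case
    apply (rule tr_eqI2)
     subgoal by auto
    apply (simp add: Suc.IH)
    apply (rule iffI)
    apply (elim disjE exE conjE)
      apply (rule disjI1, fastforce simp: Suc.IH)
     apply (rule disjI2, fastforce)
    apply (rule disjI2, fastforce)
    apply (elim disjE exE conjE)
      apply (rule disjI1, fastforce simp: Suc.IH)
    subgoal for a X u D C
      by (rule disjI1, rule exI[where x="trunc k C"]) auto
    subgoal for a X u D ua Da
      by (rule disjI2) auto
    done
qed simp


lemma obs_Mu_outs: "fset (touts (obs (Suc k) (Mu v e))) = fset (touts (obs (Suc k) e)) - {v}"
  by (auto simp: outp_simps)

lemma obs_Mu_kids:
  fixes e :: "'a exp"
  assumes IHk: "\<And>\<sigma> (e::'a exp). obs k (ssubst \<sigma> e) = tsub k (obs k e) (\<lambda>u. obs k (\<sigma> u))"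
  shows "(a, X) \<in> fset (tkids (obs (Suc k) (Mu v e))) \<longleftrightarrow>
    (\<exists>C. (a, C) \<in> fset (tkids (obs (Suc k) e)) \<and> X = tsub k C (\<lambda>u. obs k ((Var(v := Mu v e)) u)))"
proof -
  have eq: "obs k (subst1 e' v (Mu v e)) = tsub k (obs k e') (\<lambda>u. obs k ((Var(v := Mu v e)) u))" for e'
    unfolding subst1_def by (rule IHk)
  show ?thesis unfolding mem_obs_kids trans_simps by (auto simp only: eq)
qed

lemma obs_ssubst: "obs k (ssubst \<sigma> e) = tsub k (obs k e) (\<lambda>u. obs k (\<sigma> u))"
proof (induction k arbitrary: \<sigma> e)
  case 0 then show ?case by simp
next
  case (Suc k)
  note IHk = Suc.IH
  show ?case
  proof (induction e arbitrary: \<sigma>)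
    case Zero
    show ?case by (rule tr_eqI2) (auto simp: trans_simps outp_simps mem_obs_kids)
  next
    case (Var v)
    show ?case by (simp add: tsub_var)
  next
    case (Pre b e)
    show ?case
      by (rule tr_eqI2) (auto simp: trans_simps outp_simps IHk mem_obs_kids)
  next
    case (Plus e f)
    have o: "fset (touts (obs (Suc k) (Plus x y))) = fset (touts (obs (Suc k) x)) \<union> fset (touts (obs (Suc k) y))" for x y :: "'a exp"
      by (auto simp: outp_simps)
    have kk: "(a, X) \<in> fset (tkids (obs (Suc k) (Plus x y))) \<longleftrightarrow> (a, X) \<in> fset (tkids (obs (Suc k) x)) \<or> (a, X) \<in> fset (tkids (obs (Suc k) y))" for x y :: "'a exp" and a X
      by (auto simp: trans_simps mem_obs_kids)
    show ?case
    proof (rule tr_eqI2)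
      show "fset (touts (obs (Suc k) (ssubst \<sigma> (Plus e f)))) = fset (touts (tsub (Suc k) (obs (Suc k) (Plus e f)) (\<lambda>u. obs (Suc k) (\<sigma> u))))"
        unfolding ssubst.simps o using Plus.IH[of \<sigma>] by (simp only: tsub_outs o) auto
      fix a X
      show "(a, X) \<in> fset (tkids (obs (Suc k) (ssubst \<sigma> (Plus e f)))) \<longleftrightarrow> (a, X) \<in> fset (tkids (tsub (Suc k) (obs (Suc k) (Plus e f)) (\<lambda>u. obs (Suc k) (\<sigma> u))))"
        unfolding ssubst.simps kk Plus.IH[of \<sigma>] mem_tsub_kids o by auto
    qed
  next
    case (Mu w e)
    define z where "z = fresh (\<Union>u\<in>fv (Mu w e). fv (\<sigma> u))"
    define \<sigma>' where "\<sigma>' = \<sigma>(w := Var z)"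
    define E where "E = ssubst \<sigma>' e"
    have fin: "finite (\<Union>u\<in>fv (Mu w e). fv (\<sigma> u))"
      by (simp add: finite_fv)
    have zn: "z \<notin> fv (\<sigma> u)" if "u \<in> fv e" "u \<noteq> w" for u
      using fresh_notin[OF fin] that unfolding z_def by auto
    have sMu: "ssubst \<sigma> (Mu w e) = Mu z E"
      by (simp add: z_def E_def \<sigma>'_def Let_def)
    have IHE: "obs (Suc k) E = tsub (Suc k) (obs (Suc k) e) (\<lambda>u. obs (Suc k) (\<sigma>' u))"
      unfolding E_def by (rule Mu.IH)
    define \<rho>z where "\<rho>z = (\<lambda>u. obs k ((Var(z := Mu z E)) u))"
    define \<rho>w where "\<rho>w = (\<lambda>u. obs k ((Var(w := Mu w e)) u))"
    have varenv: "tsub k D \<rho>z = trunc k D" if "tvars k D \<subseteq> fv t" "z \<notin> fv t" for D t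
    proof -
      have "tsub k D \<rho>z = tsub k D (\<lambda>u. obs k (Var u))"
        using that by (intro tsub_agree) (auto simp: \<rho>z_def)
      then show ?thesis by (simp add: tsub_id)
    qed
    have K1: "tsub k (tsub k C0 (\<lambda>u. trunc k (obs (Suc k) (\<sigma>' u)))) \<rho>z = tsub k (tsub k C0 \<rho>w) (\<lambda>u. trunc k (obs (Suc k) (\<sigma> u)))"
      if C0: "(a, C0) \<in> fset (tkids (obs (Suc k) e))" for a C0
    proof -
      have tv: "tvars k C0 \<subseteq> fv e"
        using tvars_kid[OF C0, of k] tvars_obs[of "Suc k" e] by auto
      have "tsub k (tsub k C0 (\<lambda>u. trunc k (obs (Suc k) (\<sigma>' u)))) \<rho>z
          = tsub k C0 (\<lambda>u. tsub k (obs k (\<sigma>' u)) \<rho>z)"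
        by (simp add: tsub_comp)
      also have "\<dots> = tsub k C0 (\<lambda>u. tsub k (\<rho>w u) (\<lambda>u. obs k (\<sigma> u)))"
      proof (rule tsub_agree, rule ballI)
        fix u assume u: "u \<in> tvars k C0"
        show "tsub k (obs k (\<sigma>' u)) \<rho>z = tsub k (\<rho>w u) (\<lambda>u. obs k (\<sigma> u))"
        proof (cases "u = w")
          case True
          have "tsub k (obs k (\<sigma>' u)) \<rho>z = obs k (Mu z E)"
            using True by (simp add: \<sigma>'_def tsub_var \<rho>z_def)
          also have "\<dots> = obs k (ssubst \<sigma> (Mu w e))" by (simp only: sMu)
          also have "\<dots> = tsub k (\<rho>w u) (\<lambda>u. obs k (\<sigma> u))"
            using True IHk[of \<sigma> "Mu w e"] by (simp add: \<rho>w_def tsub_var del: ssubst.simps)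
          finally show ?thesis .
        next
          case False
          have ufv: "u \<in> fv e" using u tv by auto
          have "tsub k (obs k (\<sigma>' u)) \<rho>z = trunc k (obs k (\<sigma> u))"
            using False zn[OF ufv False] tvars_obs[of k "\<sigma> u"] by (simp add: \<sigma>'_def varenv)
          also have "\<dots> = tsub k (\<rho>w u) (\<lambda>u. obs k (\<sigma> u))"
            using False by (simp add: \<rho>w_def tsub_var)
          finally show ?thesis .
        qed
      qed
      also have "\<dots> = tsub k (tsub k C0 \<rho>w) (\<lambda>u. trunc k (obs (Suc k) (\<sigma> u)))"
        by (simp add: tsub_comp)
      finally show ?thesis .
    qed
    have K2: "tsub k (trunc k D) \<rho>z = trunc k D"
      if "outp e u" "u \<noteq> w" "(a, D) \<in> fset (tkids (obs (Suc k) (\<sigma> u)))" for u a D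
    proof -
      have "tvars k D \<subseteq> fv (\<sigma> u)"
        using tvars_kid[OF that(3), of k] tvars_obs[of "Suc k" "\<sigma> u"] by auto
      then have "tsub k D \<rho>z = trunc k D"
        using zn[OF outp_fv[OF that(1)] that(2)] by (rule varenv)
      then show ?thesis by simp
    qed
    have nokids: "(a, D) \<notin> fset (tkids (obs (Suc k) (\<sigma>' w)))" for a D
      by (simp add: \<sigma>'_def mem_obs_kids trans_simps)
    have outsw: "fset (touts (obs (Suc k) (\<sigma>' w))) = {z}"
      by (simp add: \<sigma>'_def outp_simps)
    have outsu: "fset (touts (obs (Suc k) (\<sigma>' u))) = fset (touts (obs (Suc k) (\<sigma> u)))" if "u \<noteq> w" for u
      using that by (simp add: \<sigma>'_def)
    have kidsu: "fset (tkids (obs (Suc k) (\<sigma>' u))) = fset (tkids (obs (Suc k) (\<sigma> u)))" if "u \<noteq> w" for u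
      using that by (simp add: \<sigma>'_def)
    show ?case
    proof (rule tr_eqI2)
      show "fset (touts (obs (Suc k) (ssubst \<sigma> (Mu w e)))) = fset (touts (tsub (Suc k) (obs (Suc k) (Mu w e)) (\<lambda>u. obs (Suc k) (\<sigma> u))))"
      proof -
        have "fset (touts (obs (Suc k) (ssubst \<sigma> (Mu w e)))) = fset (touts (obs (Suc k) E)) - {z}"
          unfolding sMu obs_Mu_outs ..
        also have "\<dots> = (\<Union>u\<in>{v. outp e v}. fset (touts (obs (Suc k) (\<sigma>' u)))) - {z}"
          unfolding IHE by simp
        also have "\<dots> = (\<Union>u\<in>{v. outp e v} - {w}. fset (touts (obs (Suc k) (\<sigma> u))))"
        proof -
          have "z \<notin> fset (touts (obs (Suc k) (\<sigma> u)))" if "outp e u" "u \<noteq> w" for u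
            using zn[OF outp_fv[OF that(1)] that(2)] outp_fv[of "\<sigma> u"] by auto
          moreover have "outp (\<sigma>' u) x \<longleftrightarrow> (if u = w then x = z else outp (\<sigma> u) x)" for u x
            by (simp add: \<sigma>'_def outp_simps)
          ultimately show ?thesis by (auto split: if_splits)
        qed
        also have "\<dots> = fset (touts (tsub (Suc k) (obs (Suc k) (Mu w e)) (\<lambda>u. obs (Suc k) (\<sigma> u))))"
          by (simp add: outp_simps) blast
        finally show ?thesis .
      qed
      fix a X
      have "(a, X) \<in> fset (tkids (obs (Suc k) (ssubst \<sigma> (Mu w e)))) \<longleftrightarrow>
         (\<exists>C. (a, C) \<in> fset (tkids (obs (Suc k) E)) \<and> X = tsub k C \<rho>z)"
        unfolding sMu obs_Mu_kids[OF IHk] \<rho>z_def ..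
      also have "\<dots> \<longleftrightarrow> (\<exists>C0. (a, C0) \<in> fset (tkids (obs (Suc k) e)) \<and>
                X = tsub k (tsub k C0 (\<lambda>u. trunc k (obs (Suc k) (\<sigma>' u)))) \<rho>z) \<or>
            (\<exists>u D. outp e u \<and> (a, D) \<in> fset (tkids (obs (Suc k) (\<sigma>' u))) \<and> X = tsub k (trunc k D) \<rho>z)"
        unfolding IHE mem_tsub_kids obs_outs by blast
      also have "\<dots> \<longleftrightarrow> (\<exists>C0. (a, C0) \<in> fset (tkids (obs (Suc k) e)) \<and>
                X = tsub k (tsub k C0 \<rho>w) (\<lambda>u. trunc k (obs (Suc k) (\<sigma> u)))) \<or>
            (\<exists>u D. outp e u \<and> u \<noteq> w \<and> (a, D) \<in> fset (tkids (obs (Suc k) (\<sigma> u))) \<and> X = trunc k D)"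
        using K1 K2 nokids kidsu by metis
      also have "\<dots> \<longleftrightarrow> (a, X) \<in> fset (tkids (tsub (Suc k) (obs (Suc k) (Mu w e)) (\<lambda>u. obs (Suc k) (\<sigma> u))))"
        unfolding mem_tsub_kids obs_Mu_kids[OF IHk] \<rho>w_def obs_Mu_outs obs_outs by (auto simp: outp_simps)
      finally show "(a, X) \<in> fset (tkids (obs (Suc k) (ssubst \<sigma> (Mu w e)))) \<longleftrightarrow> (a, X) \<in> fset (tkids (tsub (Suc k) (obs (Suc k) (Mu w e)) (\<lambda>u. obs (Suc k) (\<sigma> u))))" .
    qed
  qed
qed



lemma supz_le: "finite A \<Longrightarrow> 0 \<le> c \<Longrightarrow> (\<And>x. x \<in> A \<Longrightarrow> f x \<le> c) \<Longrightarrow> supz A f \<le> c"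
  unfolding supz_def by (auto simp: cSup_eq_Max)

lemma supz_ge: "finite A \<Longrightarrow> x \<in> A \<Longrightarrow> f x \<le> supz A f"
  unfolding supz_def by (auto simp: cSup_eq_Max)

lemma supz_nonneg: "finite A \<Longrightarrow> (\<And>x. x \<in> A \<Longrightarrow> 0 \<le> f x) \<Longrightarrow> 0 \<le> supz A f"
  unfolding supz_def by (auto simp: cSup_eq_Max Max_ge_iff)

lemma infz_le: "finite B \<Longrightarrow> y \<in> B \<Longrightarrow> infz B g \<le> g y"
  unfolding infz_def by (auto simp: cInf_eq_Min)

lemma infz_attain: "finite B \<Longrightarrow> B \<noteq> {} \<Longrightarrow> \<exists>y\<in>B. infz B g = g y"
proof -
  assume f: "finite B" and n: "B \<noteq> {}"
  have "Min (g ` B) \<in> g ` B" using f n by (intro Min_in) auto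
  then obtain y where "y \<in> B" "Min (g ` B) = g y" by blast
  moreover have "infz B g = Min (g ` B)" using f n unfolding infz_def by (simp add: cInf_eq_Min)
  ultimately show ?thesis by auto
qed

lemma infz_bounds: "finite B \<Longrightarrow> (\<And>y. y \<in> B \<Longrightarrow> 0 \<le> g y \<and> g y \<le> 1) \<Longrightarrow> 0 \<le> infz B g \<and> infz B g \<le> 1"
  unfolding infz_def by (auto simp: cInf_eq_Min Min_le_iff)

lemma hausdorff_bounds:
  assumes "finite A" "finite B" "\<And>x y. 0 \<le> D x y \<and> D x y \<le> 1"
  shows "0 \<le> hausdorff D A B \<and> hausdorff D A B \<le> 1"
proof -
  have i1: "0 \<le> infz B (D x) \<and> infz B (D x) \<le> 1" for x using assms infz_bounds by blast
  have i2: "0 \<le> infz A (D y) \<and> infz A (D y) \<le> 1" for y using assms infz_bounds by blast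
  have "0 \<le> supz A (\<lambda>x. infz B (D x))" using i1 assms by (intro supz_nonneg) auto
  moreover have "supz A (\<lambda>x. infz B (D x)) \<le> 1" using i1 assms by (intro supz_le) auto
  moreover have "supz B (\<lambda>y. infz A (D y)) \<le> 1" using i2 assms by (intro supz_le) auto
  ultimately show ?thesis unfolding hausdorff_def by auto
qed

lemma hausdorff_le:
  assumes "finite A" "finite B" "0 \<le> c"
    and "\<And>x. x \<in> A \<Longrightarrow> \<exists>y\<in>B. D x y \<le> c"
    and "\<And>y. y \<in> B \<Longrightarrow> \<exists>x\<in>A. D y x \<le> c"
  shows "hausdorff D A B \<le> c"
proof -
  have "supz A (\<lambda>x. infz B (\<lambda>y. D x y)) \<le> c"
  proof (rule supz_le[OF assms(1,3)])
    fix x assume "x \<in> A"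
    then obtain y where "y \<in> B" "D x y \<le> c" using assms(4) by blast
    then show "infz B (\<lambda>y. D x y) \<le> c" using infz_le[OF assms(2), of y "D x"] by simp
  qed
  moreover have "supz B (\<lambda>y. infz A (\<lambda>x. D y x)) \<le> c"
  proof (rule supz_le[OF assms(2,3)])
    fix y assume "y \<in> B"
    then obtain x where "x \<in> A" "D y x \<le> c" using assms(5) by blast
    then show "infz A (\<lambda>x. D y x) \<le> c" using infz_le[OF assms(1), of x "D y"] by simp
  qed
  ultimately show ?thesis unfolding hausdorff_def by simp
qed

lemma hausdorff_match1:
  assumes "finite A" "finite B" "hausdorff D A B \<le> c" "c < 1" "x \<in> A"
  shows "\<exists>y\<in>B. D x y \<le> c"
proof -
  have "infz B (\<lambda>y. D x y) \<le> supz A (\<lambda>x. infz B (\<lambda>y. D x y))"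
    by (rule supz_ge[OF assms(1,5)])
  also have "\<dots> \<le> c" using assms(3) unfolding hausdorff_def by simp
  finally have le: "infz B (\<lambda>y. D x y) \<le> c" .
  have "B \<noteq> {}" using le assms(4) unfolding infz_def by auto
  then obtain y where "y \<in> B" "infz B (\<lambda>y. D x y) = D x y" using infz_attain[OF assms(2)] by blast
  then show ?thesis using le by auto
qed

lemma hausdorff_match2:
  assumes "finite A" "finite B" "hausdorff D A B \<le> c" "c < 1" "y \<in> B"
  shows "\<exists>x\<in>A. D y x \<le> c"
proof -
  have "hausdorff D B A = hausdorff D A B" unfolding hausdorff_def by simp
  then show ?thesis using hausdorff_match1[OF assms(2,1) _ assms(4,5), of D] assms(3) by simp
qed

lemma hausdorff_sym: "hausdorff D A B = hausdorff D B A"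
  unfolding hausdorff_def by simp

lemma hausdorff_lipschitz:
  assumes "finite A" "finite B" "\<And>x y. 0 \<le> D2 x y \<and> D2 x y \<le> 1" "\<And>x y. D2 x y \<le> D1 x y + c" "0 \<le> c"
    "0 \<le> hausdorff D1 A B"
  shows "hausdorff D2 A B \<le> hausdorff D1 A B + c"
proof (cases "hausdorff D1 A B + c < 1")
  case False
  have "hausdorff D2 A B \<le> 1" using hausdorff_bounds[of A B D2] assms(1,2,3) by blast
  then show ?thesis using False by linarith
next
  case True
  let ?h = "hausdorff D1 A B"
  have h1: "?h < 1" using True assms(5) by linarith
  show ?thesis
  proof (rule hausdorff_le[OF assms(1,2)])
    show "0 \<le> ?h + c" using assms(5,6) by linarith
    fix x assume "x \<in> A"
    then obtain y where "y \<in> B" "D1 x y \<le> ?h" using hausdorff_match1[OF assms(1,2) order_refl h1] by blast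
    then show "\<exists>y\<in>B. D2 x y \<le> ?h + c" using assms(4)[of x y] by force
  next
    fix y assume "y \<in> B"
    then obtain x where "x \<in> A" "D1 y x \<le> ?h" using hausdorff_match2[OF assms(1,2) order_refl h1] by blast
    then show "\<exists>x\<in>A. D2 y x \<le> ?h + c" using assms(4)[of y x] by force
  qed
qed

lemma hausdorff_image:
  assumes "\<And>x y. x \<in> S \<union> S' \<Longrightarrow> y \<in> S \<union> S' \<Longrightarrow> D1 (m1 x) (m1 y) = D2 (m2 x) (m2 y)"
  shows "hausdorff D1 (m1 ` S) (m1 ` S') = hausdorff D2 (m2 ` S) (m2 ` S')"
proof -
  have i1: "infz (m1 ` S') (D1 (m1 x)) = infz (m2 ` S') (D2 (m2 x))" if "x \<in> S" for x
    unfolding infz_def image_image using assms that by (auto intro!: arg_cong[where f=Inf] image_cong)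
  have i2: "infz (m1 ` S) (D1 (m1 x)) = infz (m2 ` S) (D2 (m2 x))" if "x \<in> S'" for x
    unfolding infz_def image_image using assms that by (auto intro!: arg_cong[where f=Inf] image_cong)
  have s1: "supz (m1 ` S) (\<lambda>x. infz (m1 ` S') (D1 x)) = supz (m2 ` S) (\<lambda>x. infz (m2 ` S') (D2 x))"
    unfolding supz_def image_image using i1 by (auto intro!: arg_cong[where f=Sup] image_cong)
  have s2: "supz (m1 ` S') (\<lambda>x. infz (m1 ` S) (D1 x)) = supz (m2 ` S') (\<lambda>x. infz (m2 ` S) (D2 x))"
    unfolding supz_def image_image using i2 by (auto intro!: arg_cong[where f=Sup] image_cong)
  show ?thesis unfolding hausdorff_def using s1 s2 by simp
qed



fun glift :: "('t \<Rightarrow> 't \<Rightarrow> real) \<Rightarrow> ('b \<times> 't) + nat \<Rightarrow> ('b \<times> 't) + nat \<Rightarrow> real" where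
  "glift d (Inl (a, x)) (Inl (b, y)) = (if a = b then d x y / 2 else 1)"
| "glift d (Inr m) (Inr n) = (if m = n then 0 else 1)"
| "glift d _ _ = 1"

definition tbeta :: "'a tr \<Rightarrow> (('a \<times> 'a tr) + nat) set" where
  "tbeta T = Inl ` fset (tkids T) \<union> Inr ` fset (touts T)"

lemma finite_tbeta: "finite (tbeta T)"
  unfolding tbeta_def by simp

primrec tdist :: "nat \<Rightarrow> 'a tr \<Rightarrow> 'a tr \<Rightarrow> real" where
  "tdist 0 T T' = 0"
| "tdist (Suc k) T T' = hausdorff (glift (tdist k)) (tbeta T) (tbeta T')"

lemma glift_bounds: "(\<And>x y. 0 \<le> d x y \<and> d x y \<le> 1) \<Longrightarrow> 0 \<le> glift d p q \<and> glift d p q \<le> 1"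
proof -
  assume h: "\<And>x y. 0 \<le> d x y \<and> d x y \<le> 1"
  show ?thesis
  proof (cases p)
    case (Inl p1)
    then show ?thesis
    proof (cases q)
      case (Inl q1)
      then show ?thesis using \<open>p = Inl p1\<close> h[of "snd p1" "snd q1"] by (cases p1; cases q1) auto
    qed auto
  next
    case (Inr p2)
    then show ?thesis by (cases q) auto
  qed
qed

lemma tdist_bounds: "0 \<le> tdist k T T' \<and> tdist k T T' \<le> 1"
proof (induction k arbitrary: T T')
  case (Suc k)
  show ?case unfolding tdist.simps
    by (rule hausdorff_bounds[OF finite_tbeta finite_tbeta]) (rule glift_bounds, rule Suc.IH)
qed simp

lemma tdist_sym: "tdist k T T' = tdist k T' T"
  by (cases k) (simp_all add: hausdorff_sym[of _ "tbeta T"])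

lemma glift_lt1: "glift d p q < 1 \<Longrightarrow> (\<exists>v. p = Inr v \<and> q = Inr v) \<or> (\<exists>a x y. p = Inl (a, x) \<and> q = Inl (a, y) \<and> glift d p q = d x y / 2)"
  by (cases "(d, p, q)" rule: glift.cases) (auto split: if_splits)

lemma tdist_match:
  assumes "tdist (Suc k) T T' \<le> c" "c < 1"
  shows "fset (touts T) = fset (touts T')"
    and "\<And>a C. (a, C) \<in> fset (tkids T) \<Longrightarrow> \<exists>C'. (a, C') \<in> fset (tkids T') \<and> tdist k C C' \<le> 2 * c"
    and "\<And>a C'. (a, C') \<in> fset (tkids T') \<Longrightarrow> \<exists>C. (a, C) \<in> fset (tkids T) \<and> tdist k C' C \<le> 2 * c"
proof -
  have H: "hausdorff (glift (tdist k)) (tbeta T) (tbeta T') \<le> c" using assms(1) by simp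
  note m1 = hausdorff_match1[OF finite_tbeta finite_tbeta H assms(2)]
  note m2 = hausdorff_match2[OF finite_tbeta finite_tbeta H assms(2)]
  note gl = glift_lt1
  show "fset (touts T) = fset (touts T')"
  proof (intro set_eqI iffI)
    fix v assume "v \<in> fset (touts T)"
    then have "Inr v \<in> tbeta T" unfolding tbeta_def by auto
    then obtain q where "q \<in> tbeta T'" "glift (tdist k) (Inr v) q \<le> c" using m1 by blast
    then show "v \<in> fset (touts T')" using gl[of "tdist k" "Inr v" q] assms(2) unfolding tbeta_def by auto
  next
    fix v assume "v \<in> fset (touts T')"
    then have "Inr v \<in> tbeta T'" unfolding tbeta_def by auto
    then obtain q where "q \<in> tbeta T" "glift (tdist k) (Inr v) q \<le> c" using m2 by blast
    then show "v \<in> fset (touts T)" using gl[of "tdist k" "Inr v" q] assms(2) unfolding tbeta_def by auto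
  qed
  fix a C assume "(a, C) \<in> fset (tkids T)"
  then have "Inl (a, C) \<in> tbeta T" unfolding tbeta_def by auto
  then obtain q where q: "q \<in> tbeta T'" "glift (tdist k) (Inl (a, C)) q \<le> c" using m1 by blast
  then obtain y where "q = Inl (a, y)" "tdist k C y / 2 \<le> c"
    using gl[of "tdist k" "Inl (a, C)" q] assms(2) by auto
  then show "\<exists>C'. (a, C') \<in> fset (tkids T') \<and> tdist k C C' \<le> 2 * c" using q(1) unfolding tbeta_def by auto
next
  fix b D assume "(b, D) \<in> fset (tkids T')"
  then have "Inl (b, D) \<in> tbeta T'" unfolding tbeta_def by auto
  then obtain q where q: "q \<in> tbeta T" "glift (tdist k) (Inl (b, D)) q \<le> c"
    using hausdorff_match2[OF finite_tbeta finite_tbeta _ assms(2)] assms(1) by fastforce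
  then obtain y where "q = Inl (b, y)" "tdist k D y / 2 \<le> c"
    using glift_lt1[of "tdist k" "Inl (b, D)" q] assms(2) by auto
  then show "\<exists>C. (b, C) \<in> fset (tkids T) \<and> tdist k D C \<le> 2 * c" using q(1) unfolding tbeta_def by auto
qed

lemma tdist_le:
  assumes "0 \<le> c" "fset (touts T) = fset (touts T')"
    and "\<And>a C. (a, C) \<in> fset (tkids T) \<Longrightarrow> \<exists>C'. (a, C') \<in> fset (tkids T') \<and> tdist k C C' \<le> 2 * c"
    and "\<And>a C'. (a, C') \<in> fset (tkids T') \<Longrightarrow> \<exists>C. (a, C) \<in> fset (tkids T) \<and> tdist k C' C \<le> 2 * c"
  shows "tdist (Suc k) T T' \<le> c"
  unfolding tdist.simps
proof (rule hausdorff_le[OF finite_tbeta finite_tbeta assms(1)])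
  fix p assume "p \<in> tbeta T"
  then consider (l) a C where "p = Inl (a, C)" "(a, C) \<in> fset (tkids T)" | (r) v where "p = Inr v" "v \<in> fset (touts T)"
    unfolding tbeta_def by auto
  then show "\<exists>q\<in>tbeta T'. glift (tdist k) p q \<le> c"
  proof cases
    case l
    then obtain C' where "(a, C') \<in> fset (tkids T')" "tdist k C C' \<le> 2 * c" using assms(3) by blast
    then show ?thesis using l unfolding tbeta_def by (intro bexI[of _ "Inl (a, C')"]) auto
  next
    case r
    then show ?thesis using assms(1,2) unfolding tbeta_def by (intro bexI[of _ "Inr v"]) auto
  qed
next
  fix p assume "p \<in> tbeta T'"
  then consider (l) a C where "p = Inl (a, C)" "(a, C) \<in> fset (tkids T')" | (r) v where "p = Inr v" "v \<in> fset (touts T')"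
    unfolding tbeta_def by auto
  then show "\<exists>q\<in>tbeta T. glift (tdist k) p q \<le> c"
  proof cases
    case l
    then obtain C' where "(a, C') \<in> fset (tkids T)" "tdist k C C' \<le> 2 * c" using assms(4) by blast
    then show ?thesis using l unfolding tbeta_def by (intro bexI[of _ "Inl (a, C')"]) auto
  next
    case r
    then show ?thesis using assms(1,2) unfolding tbeta_def by (intro bexI[of _ "Inr v"]) auto
  qed
qed

lemma tdist_refl: "tdist k T T = 0"
proof (induction k arbitrary: T)
  case (Suc k)
  have "tdist (Suc k) T T \<le> 0"
    by (rule tdist_le) (auto simp: Suc.IH)
  then show ?case using tdist_bounds[of "Suc k" T T] by linarith
qed simp

lemma tdist_mono: "tdist k A B \<le> tdist (Suc k) A B"
proof (induction k arbitrary: A B)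
  case 0 then show ?case using tdist_bounds[of 1 A B] by simp
next
  case (Suc k)
  let ?c = "tdist (Suc (Suc k)) A B"
  show ?case
  proof (cases "?c < 1")
    case False
    then show ?thesis using tdist_bounds[of "Suc k" A B] by linarith
  next
    case True
    note M = tdist_match[OF order_refl True]
    show ?thesis
    proof (rule tdist_le)
      show "0 \<le> ?c" using tdist_bounds by blast
      show "fset (touts A) = fset (touts B)" by (rule M(1))
      fix a C assume "(a, C) \<in> fset (tkids A)"
      then obtain C' where "(a, C') \<in> fset (tkids B)" "tdist (Suc k) C C' \<le> 2 * ?c" using M(2) by blast
      then show "\<exists>C'. (a, C') \<in> fset (tkids B) \<and> tdist k C C' \<le> 2 * ?c" using Suc.IH[of C C'] by force
    next
      fix a C assume "(a, C) \<in> fset (tkids B)"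
      then obtain C' where "(a, C') \<in> fset (tkids A)" "tdist (Suc k) C C' \<le> 2 * ?c" using M(3) by blast
      then show "\<exists>C'. (a, C') \<in> fset (tkids A) \<and> tdist k C C' \<le> 2 * ?c" using Suc.IH[of C C'] by force
    qed
  qed
qed

lemma tdist_trunc: "k \<le> j \<Longrightarrow> tdist k (trunc j A) (trunc j B) = tdist k A B"
proof (induction k arbitrary: j A B)
  case 0 then show ?case by simp
next
  case (Suc k)
  then obtain j' where j: "j = Suc j'" "k \<le> j'" by (cases j) auto
  let ?m = "map_sum (\<lambda>(a, C). (a, trunc j' C)) id :: ('a \<times> 'a tr) + nat \<Rightarrow> _"
  have tb: "tbeta (trunc (Suc j') T) = ?m ` tbeta T" for T :: "'a tr"
    unfolding tbeta_def by (simp add: trunc_kids image_Un image_image)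
  have "hausdorff (glift (tdist k)) (?m ` tbeta A) (?m ` tbeta B) = hausdorff (glift (tdist k)) (id ` tbeta A) (id ` tbeta B)"
  proof (rule hausdorff_image)
    fix x y :: "('a \<times> 'a tr) + nat"
    show "glift (tdist k) (?m x) (?m y) = glift (tdist k) (id x) (id y)"
      by (cases "(tdist k :: 'a tr \<Rightarrow> 'a tr \<Rightarrow> real, x, y)" rule: glift.cases) (auto simp: Suc.IH[OF j(2)])
  qed
  then show ?case by (simp add: j tb)
qed

lemma glift_triangle:
  assumes "\<And>x y z. d x z \<le> d x y + d y z" "\<And>x y. 0 \<le> d x y \<and> d x y \<le> 1"
  shows "glift d p r \<le> glift d p q + glift d q r"
proof -
  have b: "0 \<le> glift d p q \<and> glift d p q \<le> 1" for p q using glift_bounds assms(2) by blast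
  show ?thesis
  proof (cases "glift d p q < 1 \<and> glift d q r < 1")
    case False then show ?thesis using b[of p r] b[of p q] b[of q r] by linarith
  next
    case True
    have gl: "glift d p q < 1 \<Longrightarrow> (\<exists>v. p = Inr v \<and> q = Inr v) \<or> (\<exists>a x y. p = Inl (a, x) \<and> q = Inl (a, y) \<and> glift d p q = d x y / 2)" for p q
      by (cases "(d, p, q)" rule: glift.cases) (auto split: if_splits)
    from True gl[of p q] gl[of q r] show ?thesis
      using assms(1) by auto
  qed
qed

lemma tdist_triangle: "tdist k A C \<le> tdist k A B + tdist k B C"
proof (induction k arbitrary: A B C)
  case (Suc k)
  let ?c1 = "tdist (Suc k) A B" and ?c2 = "tdist (Suc k) B C"
  show ?case
  proof (cases "?c1 < 1 \<and> ?c2 < 1")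
    case False
    then show ?thesis using tdist_bounds[of "Suc k" A C] tdist_bounds[of "Suc k" A B] tdist_bounds[of "Suc k" B C] by linarith
  next
    case True
    note M1 = tdist_match[OF order_refl conjunct1[OF True]]
    note M2 = tdist_match[OF order_refl conjunct2[OF True]]
    show ?thesis
    proof (rule tdist_le)
      show "0 \<le> ?c1 + ?c2" using tdist_bounds[of "Suc k" A B] tdist_bounds[of "Suc k" B C] by linarith
      show "fset (touts A) = fset (touts C)" using M1(1) M2(1) by simp
      fix a X assume "(a, X) \<in> fset (tkids A)"
      then obtain Y where Y: "(a, Y) \<in> fset (tkids B)" "tdist k X Y \<le> 2 * ?c1" using M1(2) by blast
      then obtain Z where Z: "(a, Z) \<in> fset (tkids C)" "tdist k Y Z \<le> 2 * ?c2" using M2(2) by blast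
      show "\<exists>Z. (a, Z) \<in> fset (tkids C) \<and> tdist k X Z \<le> 2 * (?c1 + ?c2)"
        using Z Y Suc.IH[of X Z Y] by (intro exI[of _ Z]) auto
    next
      fix a X assume "(a, X) \<in> fset (tkids C)"
      then obtain Y where Y: "(a, Y) \<in> fset (tkids B)" "tdist k X Y \<le> 2 * ?c2" using M2(3) by blast
      then obtain Z where Z: "(a, Z) \<in> fset (tkids A)" "tdist k Y Z \<le> 2 * ?c1" using M1(3) by blast
      show "\<exists>Z. (a, Z) \<in> fset (tkids A) \<and> tdist k X Z \<le> 2 * (?c1 + ?c2)"
        using Z Y Suc.IH[of X Z Y] by (intro exI[of _ Z]) auto
    qed
  qed
qed simp



lemma tdist_trunc_le: "tdist k (trunc k A) (trunc k B) \<le> tdist (Suc k) A B"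
  using tdist_trunc[of k k A B] tdist_mono[of k A B] by simp

lemma tdist_tsub:
  fixes T T' :: "'a tr"
  shows "0 \<le> c \<Longrightarrow> tdist k T T' \<le> c \<Longrightarrow> (\<And>u. tdist k (\<rho> u) (\<rho>' u) \<le> c) \<Longrightarrow> tdist k (tsub k T \<rho>) (tsub k T' \<rho>') \<le> c"
proof (induction k arbitrary: T T' \<rho> \<rho>' c)
  case 0 then show ?case by simp
next
  case (Suc k)
  show ?case
  proof (cases "c < 1")
    case False
    then show ?thesis using tdist_bounds[of "Suc k" "tsub (Suc k) T \<rho>" "tsub (Suc k) T' \<rho>'"] by linarith
  next
    case True
    have half: "\<exists>X'. (a, X') \<in> fset (tkids (tsub (Suc k) T' \<rho>')) \<and> tdist k X X' \<le> 2 * c"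
      if h1: "tdist (Suc k) T T' \<le> c" and h2: "\<And>u. tdist (Suc k) (\<rho> u) (\<rho>' u) \<le> c"
        and m: "(a, X) \<in> fset (tkids (tsub (Suc k) T \<rho>))" for T T' :: "'a tr" and \<rho> \<rho>' :: "nat \<Rightarrow> 'a tr" and a X
    proof -
      note MT = tdist_match[OF h1 True]
      from m consider (l) C where "(a, C) \<in> fset (tkids T)" "X = tsub k C (\<lambda>u. trunc k (\<rho> u))"
        | (r) u D where "u \<in> fset (touts T)" "(a, D) \<in> fset (tkids (\<rho> u))" "X = trunc k D"
        by auto
      then show ?thesis
      proof cases
        case l
        then obtain C' where C': "(a, C') \<in> fset (tkids T')" "tdist k C C' \<le> 2 * c" using MT(2) by blast
        have "tdist k (tsub k C (\<lambda>u. trunc k (\<rho> u))) (tsub k C' (\<lambda>u. trunc k (\<rho>' u))) \<le> 2 * c"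
        proof (rule Suc.IH)
          show "0 \<le> 2 * c" using Suc.prems(1) by simp
          show "tdist k C C' \<le> 2 * c" by fact
          fix u show "tdist k (trunc k (\<rho> u)) (trunc k (\<rho>' u)) \<le> 2 * c"
            using tdist_trunc_le[of k "\<rho> u" "\<rho>' u"] h2[of u] Suc.prems(1) by linarith
        qed
        then show ?thesis using C' l by auto
      next
        case r
        note MU = tdist_match[OF h2[of u] True]
        obtain D' where D': "(a, D') \<in> fset (tkids (\<rho>' u))" "tdist k D D' \<le> 2 * c" using MU(2) r(2) by blast
        have "u \<in> fset (touts T')" using MT(1) r(1) by simp
        moreover have "tdist k (trunc k D) (trunc k D') \<le> 2 * c" using D'(2) tdist_trunc[of k k D D'] by simp
        ultimately show ?thesis using D'(1) r(3) by auto
      qed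
    qed
    show ?thesis
    proof (rule tdist_le)
      show "0 \<le> c" by fact
      note MT = tdist_match[OF Suc.prems(2) True]
      show "fset (touts (tsub (Suc k) T \<rho>)) = fset (touts (tsub (Suc k) T' \<rho>'))"
        using MT(1) tdist_match(1)[OF Suc.prems(3) True] by simp
    next
      fix a X assume "(a, X) \<in> fset (tkids (tsub (Suc k) T \<rho>))"
      then show "\<exists>X'. (a, X') \<in> fset (tkids (tsub (Suc k) T' \<rho>')) \<and> tdist k X X' \<le> 2 * c"
        using half[of T T' \<rho> \<rho>' a X] Suc.prems by blast
    next
      fix a X assume "(a, X) \<in> fset (tkids (tsub (Suc k) T' \<rho>'))"
      then show "\<exists>X'. (a, X') \<in> fset (tkids (tsub (Suc k) T \<rho>)) \<and> tdist k X X' \<le> 2 * c"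
        using half[of T' T \<rho>' \<rho>] Suc.prems(2,3) tdist_sym by metis
    qed
  qed
qed

definition ed :: "nat \<Rightarrow> 'a exp \<Rightarrow> 'a exp \<Rightarrow> real" where
  "ed k e f = tdist k (obs k e) (obs k f)"

lemma ed_mono: "ed k e f \<le> ed (Suc k) e f"
  unfolding ed_def using tdist_trunc_le[of k "obs (Suc k) e" "obs (Suc k) f"] by simp

lemma ed_refl: "ed k e e = 0"
  unfolding ed_def by (rule tdist_refl)

lemma ed_ssubst:
  "0 \<le> c \<Longrightarrow> ed k e e' \<le> c \<Longrightarrow> (\<And>u. ed k (\<sigma> u) (\<sigma>' u) \<le> c) \<Longrightarrow> ed k (ssubst \<sigma> e) (ssubst \<sigma>' e') \<le> c"
  unfolding ed_def obs_ssubst by (rule tdist_tsub)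

lemma ed_Mu: fixes e e' :: "'a exp" shows "0 \<le> c \<Longrightarrow> ed k e e' \<le> c \<Longrightarrow> ed k (Mu v e) (Mu v e') \<le> c"
proof (induction k arbitrary: e e' c)
  case 0 then show ?case by (simp add: ed_def)
next
  case (Suc k)
  show ?case
  proof (cases "c < 1")
    case False
    then show ?thesis using tdist_bounds[of "Suc k" "obs (Suc k) (Mu v e)" "obs (Suc k) (Mu v e')"] by (simp add: ed_def)
  next
    case True
    have h1: "tdist (Suc k) (obs (Suc k) e) (obs (Suc k) e') \<le> c" using Suc.prems(2) by (simp add: ed_def)
    have ek: "ed k e e' \<le> c" using ed_mono[of k e e'] Suc.prems(2) by linarith
    have muk: "ed k (Mu v e) (Mu v e') \<le> c" by (rule Suc.IH[OF Suc.prems(1) ek])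
    have half: "\<exists>X'. (a, X') \<in> fset (tkids (obs (Suc k) (Mu v f'))) \<and> tdist k X X' \<le> 2 * c"
      if h: "tdist (Suc k) (obs (Suc k) f) (obs (Suc k) f') \<le> c" and hm: "ed k (Mu v f) (Mu v f') \<le> c"
        and m: "(a, X) \<in> fset (tkids (obs (Suc k) (Mu v f)))" for f f' :: "'a exp" and a X
    proof -
      note M = tdist_match[OF h True]
      obtain C where C: "(a, C) \<in> fset (tkids (obs (Suc k) f))" "X = tsub k C (\<lambda>u. obs k ((Var(v := Mu v f)) u))"
        using m unfolding obs_Mu_kids[OF obs_ssubst] by blast
      obtain C' where C': "(a, C') \<in> fset (tkids (obs (Suc k) f'))" "tdist k C C' \<le> 2 * c" using M(2) C(1) by blast
      have "tdist k X (tsub k C' (\<lambda>u. obs k ((Var(v := Mu v f')) u))) \<le> 2 * c"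
        unfolding C(2)
      proof (rule tdist_tsub)
        show "0 \<le> 2 * c" using Suc.prems(1) by simp
        show "tdist k C C' \<le> 2 * c" by fact
        fix u show "tdist k (obs k ((Var(v := Mu v f)) u)) (obs k ((Var(v := Mu v f')) u)) \<le> 2 * c"
          using hm Suc.prems(1) by (auto simp: ed_def tdist_refl)
      qed
      then show ?thesis unfolding obs_Mu_kids[OF obs_ssubst] using C'(1) by blast
    qed
    show ?thesis unfolding ed_def
    proof (rule tdist_le)
      show "0 \<le> c" by fact
      show "fset (touts (obs (Suc k) (Mu v e))) = fset (touts (obs (Suc k) (Mu v e')))"
        using tdist_match(1)[OF h1 True] by (simp only: obs_Mu_outs)
    next
      fix a X assume "(a, X) \<in> fset (tkids (obs (Suc k) (Mu v e)))"
      then show "\<exists>X'. (a, X') \<in> fset (tkids (obs (Suc k) (Mu v e'))) \<and> tdist k X X' \<le> 2 * c"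
        using half[OF h1 muk] by blast
    next
      fix a X assume "(a, X) \<in> fset (tkids (obs (Suc k) (Mu v e')))"
      moreover have "tdist (Suc k) (obs (Suc k) e') (obs (Suc k) e) \<le> c" using h1 tdist_sym by metis
      moreover have "ed k (Mu v e') (Mu v e) \<le> c" using muk tdist_sym unfolding ed_def by metis
      ultimately show "\<exists>X'. (a, X') \<in> fset (tkids (obs (Suc k) (Mu v e))) \<and> tdist k X X' \<le> 2 * c"
        using half by blast
    qed
  qed
qed



lemma bisim_outp: "bisimilar e f \<Longrightarrow> outp e v \<longleftrightarrow> outp f v"
  unfolding bisimilar_def bisim_def by blast

lemma bisim_trans: "bisimilar e f \<Longrightarrow> trans f a f' \<Longrightarrow> \<exists>e'. trans e a e' \<and> bisimilar e' f'"
  unfolding bisimilar_def bisim_def by blast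

lemma abs_eq: "abs_beh e = abs_beh f \<longleftrightarrow> bisimilar e f"
  using beh.abs_eq_iff by metis

lemma boutp_abs: "boutp (abs_beh e) v \<longleftrightarrow> outp e v"
  unfolding boutp_def abs_eq using bisim_outp equivp_reflp[OF bisimilar_equivp] by metis

lemma btrans_abs: "btrans (abs_beh e) a y \<longleftrightarrow> (\<exists>e'. trans e a e' \<and> y = abs_beh e')"
proof
  assume "btrans (abs_beh e) a y"
  then obtain e1 e1' where "abs_beh e = abs_beh e1" "y = abs_beh e1'" "trans e1 a e1'"
    unfolding btrans_def by blast
  then obtain e' where "trans e a e'" "bisimilar e' e1'" using bisim_trans abs_eq by metis
  then show "\<exists>e'. trans e a e' \<and> y = abs_beh e'" using \<open>y = abs_beh e1'\<close> abs_eq by metis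
next
  assume "\<exists>e'. trans e a e' \<and> y = abs_beh e'"
  then show "btrans (abs_beh e) a y" unfolding btrans_def by blast
qed

definition Sx :: "'a exp \<Rightarrow> (('a \<times> 'a exp) + nat) set" where
  "Sx e = Inl ` {(a, e'). trans e a e'} \<union> Inr ` {v. outp e v}"

lemma finite_Sx: "finite (Sx e)"
  unfolding Sx_def by (intro finite_UnI finite_imageI finite_trans finite_outp)

lemma beta_abs: "beta (abs_beh e) = map_sum (map_prod id abs_beh) id ` Sx e"
  unfolding beta_def Sx_def by (auto simp: btrans_abs boutp_abs image_Un image_iff)

lemma tbeta_obs: "tbeta (obs (Suc k) e) = map_sum (map_prod id (obs k)) id ` Sx e"
  unfolding tbeta_def Sx_def by (auto simp: obs_kids image_Un image_iff)

lemma finite_beta: "finite (beta x)"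
  by (induction x rule: beh.abs_induct) (simp add: beta_abs finite_Sx)

lemma lift_glift: "lift_d d p q = glift d p q"
  by (cases "(d, p, q)" rule: lift_d.cases) auto

definition it :: "nat \<Rightarrow> 'a beh \<Rightarrow> 'a beh \<Rightarrow> real" where
  "it k = (Phi ^^ k) (\<lambda>x y. 0)"

lemma it_Suc: "it (Suc k) = Phi (it k)"
  unfolding it_def by simp

lemma it_ed: "it k (abs_beh e) (abs_beh f) = ed k e f"
proof (induction k arbitrary: e f)
  case 0 then show ?case by (simp add: it_def ed_def)
next
  case (Suc k)
  have "it (Suc k) (abs_beh e) (abs_beh f) =
     hausdorff (lift_d (it k)) (map_sum (map_prod id abs_beh) id ` Sx e) (map_sum (map_prod id abs_beh) id ` Sx f)"
    by (simp add: it_Suc Phi_def beta_abs)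
  also have "\<dots> = hausdorff (glift (tdist k)) (map_sum (map_prod id (obs k)) id ` Sx e) (map_sum (map_prod id (obs k)) id ` Sx f)"
  proof (rule hausdorff_image)
    fix x y :: "('a \<times> 'a exp) + nat"
    show "lift_d (it k) (map_sum (map_prod id abs_beh) id x) (map_sum (map_prod id abs_beh) id y) =
          glift (tdist k) (map_sum (map_prod id (obs k)) id x) (map_sum (map_prod id (obs k)) id y)"
      by (cases x; cases y) (auto simp: Suc.IH ed_def split_beta map_prod_def)
  qed
  also have "\<dots> = ed (Suc k) e f"
    by (simp add: ed_def tbeta_obs)
  finally show ?case .
qed

definition b01 :: "('b \<Rightarrow> 'b \<Rightarrow> real) \<Rightarrow> bool" where
  "b01 d \<longleftrightarrow> (\<forall>x y. 0 \<le> d x y \<and> d x y \<le> 1)"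

lemma Phi_b01: "b01 d \<Longrightarrow> b01 (Phi d)"
  unfolding b01_def Phi_def lift_glift
  by (intro allI hausdorff_bounds finite_beta glift_bounds) auto

lemma Phi_nonneg: "b01 d \<Longrightarrow> 0 \<le> Phi d x y"
  using Phi_b01 b01_def by blast

lemma Phi_lip:
  assumes "b01 d1" "b01 d2" "\<And>x y. d2 x y \<le> d1 x y + c" "0 \<le> c"
  shows "Phi d2 x y \<le> Phi d1 x y + c / 2"
  unfolding Phi_def
proof (rule hausdorff_lipschitz[OF finite_beta finite_beta])
  show "0 \<le> lift_d d2 p q \<and> lift_d d2 p q \<le> 1" for p q
  proof -
    have "\<And>x y. 0 \<le> d2 x y \<and> d2 x y \<le> 1" using assms(2) unfolding b01_def by blast
    then show ?thesis unfolding lift_glift by (rule glift_bounds)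
  qed
  show "lift_d d2 p q \<le> lift_d d1 p q + c / 2" for p q
    unfolding lift_glift using assms(3,4)
    by (cases "(d2, p, q)" rule: glift.cases) (auto simp: divide_right_mono add_divide_distrib[symmetric])
  show "0 \<le> c / 2" using assms(4) by simp
  show "0 \<le> hausdorff (lift_d d1) (beta x) (beta y)"
    using Phi_nonneg[OF assms(1)] unfolding Phi_def .
qed

lemma it_b01: "b01 (it k)"
proof (induction k)
  case 0 show ?case by (simp add: it_def b01_def)
next
  case (Suc k) then show ?case by (simp add: it_Suc Phi_b01)
qed

lemma it_mono: "it k x y \<le> it (Suc k) x y"
proof (induction k arbitrary: x y)
  case 0
  have "0 \<le> it 1 x y" using it_b01[of 1] unfolding b01_def by blast
  then show ?case by (simp add: it_def)
next
  case (Suc k)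
  have "Phi (it k) x y \<le> Phi (it (Suc k)) x y + 0 / 2"
    by (rule Phi_lip[OF it_b01 it_b01]) (auto simp: Suc.IH)
  then show ?case by (simp add: it_Suc)
qed

lemma it_mono_le: "k \<le> m \<Longrightarrow> it k x y \<le> it m x y"
proof (induction m)
  case 0 then show ?case by simp
next
  case (Suc m)
  then show ?case using it_mono[of m x y] by (cases "k = Suc m") auto
qed

lemma it_step: "it (Suc k) x y \<le> it k x y + (1/2)^k"
proof (induction k arbitrary: x y)
  case 0
  have "it 1 x y \<le> 1" "0 \<le> it 0 x y" using it_b01[of 1] it_b01[of 0] unfolding b01_def by blast+
  then show ?case by simp
next
  case (Suc k)
  have "Phi (it (Suc k)) x y \<le> Phi (it k) x y + (1/2)^k / 2"
    by (rule Phi_lip[OF it_b01 it_b01]) (auto simp: Suc.IH)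
  then show ?case by (simp add: it_Suc)
qed

lemma it_far: "it (k + j) x y \<le> it k x y + 2 * (1/2)^k - 2 * (1/2)^(k + j)"
proof (induction j)
  case 0 then show ?case by simp
next
  case (Suc j)
  have "it (k + Suc j) x y \<le> it (k + j) x y + (1/2)^(k + j)"
    using it_step[of "k + j" x y] by simp
  then show ?case using Suc.IH by (simp add: power_add)
qed

definition Fd :: "'a beh \<Rightarrow> 'a beh \<Rightarrow> real" where
  "Fd x y = Sup (range (\<lambda>k. it k x y))"

lemma bdd_it: "bdd_above (range (\<lambda>k. it k x y))"
  using it_b01 unfolding b01_def by (intro bdd_aboveI[of _ 1]) auto

lemma it_le_Fd: "it k x y \<le> Fd x y"
  unfolding Fd_def using bdd_it by (intro cSup_upper) auto

lemma Fd_le_it: "Fd x y \<le> it k x y + 2 * (1/2)^k"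
  unfolding Fd_def
proof (rule cSup_least)
  show "range (\<lambda>k. it k x y) \<noteq> {}" by simp
  fix t assume "t \<in> range (\<lambda>k. it k x y)"
  then obtain m where t: "t = it m x y" by auto
  show "t \<le> it k x y + 2 * (1/2)^k"
  proof (cases "m \<le> k")
    case True
    have "0 \<le> (1/2::real)^k" by simp
    then show ?thesis using t it_mono_le[OF True, of x y] by linarith
  next
    case False
    then obtain j where "m = k + j" by (metis le_add_diff_inverse nat_le_linear)
    have "0 \<le> (1/2::real)^(k + j)" by simp
    moreover have "t = it (k + j) x y" using t \<open>m = k + j\<close> by simp
    ultimately show ?thesis using it_far[of k j x y] by linarith
  qed
qed

lemma Fd_le: "(\<And>k. it k x y \<le> c) \<Longrightarrow> Fd x y \<le> c"
  unfolding Fd_def by (rule cSup_least) auto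

lemma small_zero: "(\<And>k. \<bar>t\<bar> \<le> 2 * (1/2::real)^k) \<Longrightarrow> t = 0"
proof (rule ccontr)
  assume h: "\<And>k. \<bar>t\<bar> \<le> 2 * (1/2::real)^k" and "t \<noteq> 0"
  then have "0 < \<bar>t\<bar> / 2" by simp
  then obtain k where "(1/2::real)^k < \<bar>t\<bar> / 2" using real_arch_pow_inv[of "\<bar>t\<bar> / 2" "1/2"] by auto
  then show False using h[of k] by simp
qed

lemma Fd_b01: "b01 Fd"
  unfolding b01_def
proof (intro allI conjI)
  fix x y
  show "0 \<le> Fd x y" using it_le_Fd[of 0 x y] by (simp add: it_def)
  show "Fd x y \<le> 1" using it_b01 unfolding b01_def by (intro Fd_le) auto
qed

lemma Fd_fix: "Phi Fd = Fd"
proof (intro ext)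
  fix x y
  have "\<bar>Phi Fd x y - Fd x y\<bar> \<le> 2 * (1/2)^k" for k
  proof -
    have a: "Phi Fd x y \<le> Phi (it k) x y + (2 * (1/2)^k) / 2"
      by (rule Phi_lip[OF it_b01 Fd_b01]) (auto simp: Fd_le_it)
    have b: "Phi (it k) x y \<le> Phi Fd x y + 0 / 2"
      by (rule Phi_lip[OF Fd_b01 it_b01]) (auto simp: it_le_Fd)
    have c: "it (Suc k) x y \<le> Fd x y" by (rule it_le_Fd)
    have d: "Fd x y \<le> it (Suc k) x y + 2 * (1/2)^(Suc k)" by (rule Fd_le_it)
    show ?thesis using a b c d by (simp add: it_Suc abs_le_iff)
  qed
  then show "Phi Fd x y = Fd x y" using small_zero[of "Phi Fd x y - Fd x y"] by simp
qed

lemma it_refl: "it k x x = 0"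
  by (induction x rule: beh.abs_induct) (simp add: it_ed ed_refl)

lemma it_sym: "it k x y = it k y x"
proof (induction x rule: beh.abs_induct)
  case (1 e)
  show ?case by (induction y rule: beh.abs_induct) (simp add: it_ed ed_def tdist_sym)
qed

lemma it_tri: "it k x z \<le> it k x y + it k y z"
proof (induction x rule: beh.abs_induct)
  case (1 e)
  show ?case
  proof (induction y rule: beh.abs_induct)
    case (1 f)
    show ?case by (induction z rule: beh.abs_induct) (simp add: it_ed ed_def tdist_triangle)
  qed
qed

lemma Fd_pmetric: "pmetric1 Fd"
  unfolding pmetric1_def
proof (intro conjI allI)
  fix x y z
  show "Fd x x = 0" unfolding Fd_def by (simp add: it_refl)
  show "Fd x y = Fd y x" unfolding Fd_def by (simp add: it_sym[of _ x y])
  show "Fd x z \<le> Fd x y + Fd y z"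
  proof (rule Fd_le)
    fix k show "it k x z \<le> Fd x y + Fd y z" using it_tri[of k x z y] it_le_Fd[of k x y] it_le_Fd[of k y z] by linarith
  qed
  show "0 \<le> Fd x y" "Fd x y \<le> 1" using Fd_b01 unfolding b01_def by auto
qed

lemma pmetric_b01: "pmetric1 d \<Longrightarrow> b01 d"
  unfolding pmetric1_def b01_def by blast

lemma fix_unique:
  assumes "pmetric1 d" "Phi d = d"
  shows "d = Fd"
proof (intro ext)
  fix x y
  have "\<forall>x y. \<bar>d x y - Fd x y\<bar> \<le> (1/2)^n" for n
  proof (induction n)
    case 0
    show ?case
    proof (intro allI)
      fix x y
      have "0 \<le> d x y" "d x y \<le> 1" "0 \<le> Fd x y" "Fd x y \<le> 1"
        using pmetric_b01[OF assms(1)] Fd_b01 unfolding b01_def by blast+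
      then show "\<bar>d x y - Fd x y\<bar> \<le> (1/2)^0" by (simp add: abs_le_iff)
    qed
  next
    case (Suc n)
    show ?case
    proof (intro allI)
      fix x y
      have h1: "d x y \<le> Fd x y + (1/2)^n" "Fd x y \<le> d x y + (1/2)^n" for x y
      proof -
        have "\<bar>d x y - Fd x y\<bar> \<le> (1/2)^n" using Suc.IH by blast
        then show "d x y \<le> Fd x y + (1/2)^n" "Fd x y \<le> d x y + (1/2)^n" unfolding abs_le_iff by linarith+
      qed
      have a: "Phi d x y \<le> Phi Fd x y + (1/2)^n / 2"
        using h1 by (intro Phi_lip[OF Fd_b01 pmetric_b01[OF assms(1)]]) auto
      have b: "Phi Fd x y \<le> Phi d x y + (1/2)^n / 2"
        using h1 by (intro Phi_lip[OF pmetric_b01[OF assms(1)] Fd_b01]) auto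
      show "\<bar>d x y - Fd x y\<bar> \<le> (1/2)^Suc n"
      proof -
        have e1: "Phi d x y = d x y" using assms(2) by simp
        have e2: "Phi Fd x y = Fd x y" by (rule fun_cong[OF fun_cong[OF Fd_fix]])
        have p: "(1/2::real)^Suc n = (1/2)^n / 2" by simp
        show ?thesis unfolding abs_le_iff p using a b e1 e2 by linarith
      qed
    qed
  qed
  then have "\<bar>d x y - Fd x y\<bar> \<le> 2 * (1/2)^n" for n
  proof -
    have "0 \<le> (1/2::real)^n" by simp
    then show ?thesis using \<open>\<forall>x y. \<bar>d x y - Fd x y\<bar> \<le> (1/2)^n\<close> by (metis mult_2 le_add_same_cancel2 order_trans)
  qed
  then show "d x y = Fd x y" using small_zero[of "d x y - Fd x y"] by simp
qed

lemma bd_Fd: "bd = Fd"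
  unfolding bd_def
proof (rule the_equality)
  show "pmetric1 Fd \<and> Phi Fd = Fd \<and> (\<forall>d'. pmetric1 d' \<and> Phi d' = d' \<longrightarrow> (\<forall>x y. Fd x y \<le> d' x y))"
    using Fd_pmetric Fd_fix fix_unique by auto
  fix d assume "pmetric1 d \<and> Phi d = d \<and> (\<forall>d'. pmetric1 d' \<and> Phi d' = d' \<longrightarrow> (\<forall>x y. d x y \<le> d' x y))"
  then show "d = Fd" using fix_unique by blast
qed

lemma bd_le: "(\<And>k. ed k e f \<le> c) \<Longrightarrow> bd (abs_beh e) (abs_beh f) \<le> c"
  unfolding bd_Fd by (rule Fd_le) (simp add: it_ed)

lemma ed_le_bd: "ed k e f \<le> bd (abs_beh e) (abs_beh f)"
  unfolding bd_Fd using it_le_Fd[of k "abs_beh e" "abs_beh f"] by (simp add: it_ed)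



lemma length_seqc[simp]: "length (seqc f g) = length f"
  by (simp add: seqc_def)

lemma length_dagger_rev[simp]: "length (dagger_rev p l) = length l"
  by (induction l arbitrary: p) (simp_all add: Let_def)

definition close :: "nat \<Rightarrow> real \<Rightarrow> 'a exp list \<Rightarrow> 'a exp list \<Rightarrow> bool" where
  "close k c xs ys \<longleftrightarrow> length xs = length ys \<and> (\<forall>i<length xs. ed k (xs ! i) (ys ! i) \<le> c)"

lemma close_seqc:
  assumes "0 \<le> c" "close k c f f'" "close k c g g'"
  shows "close k c (seqc f g) (seqc f' g')"
  unfolding close_def
proof (intro conjI allI impI)
  show "length (seqc f g) = length (seqc f' g')" using assms(2) by (simp add: close_def)
  fix i assume i: "i < length (seqc f g)"
  let ?s = "\<lambda>j. if j < length g then g ! j else Var j"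
  let ?s' = "\<lambda>j. if j < length g' then g' ! j else Var j"
  have "ed k (ssubst ?s (f ! i)) (ssubst ?s' (f' ! i)) \<le> c"
  proof (rule ed_ssubst[OF assms(1)])
    show "ed k (f ! i) (f' ! i) \<le> c" using assms(2) i by (simp add: close_def)
    fix u show "ed k (?s u) (?s' u) \<le> c"
      using assms(1,3) by (auto simp: close_def ed_refl)
  qed
  then show "ed k (seqc f g ! i) (seqc f' g' ! i) \<le> c"
    using i assms(2) by (simp add: seqc_def close_def)
qed

lemma close_append:
  "close k c xs ys \<Longrightarrow> close k c xs' ys' \<Longrightarrow> close k c (xs @ xs') (ys @ ys')"
  unfolding close_def by (auto simp: nth_append)

lemma close_idt: "0 \<le> c \<Longrightarrow> close k c (idt p) (idt p)"
  unfolding close_def by (simp add: ed_refl)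

lemma close_single: "close k c [x] [y] \<longleftrightarrow> ed k x y \<le> c"
  unfolding close_def by simp

lemma close_dagger_rev:
  "0 \<le> c \<Longrightarrow> close k c f g \<Longrightarrow> close k c (dagger_rev p f) (dagger_rev p g)"
proof (induction f arbitrary: p g)
  case Nil then show ?case by (simp add: close_def)
next
  case (Cons x rf)
  obtain y rg where g: "g = y # rg" using Cons.prems(2) by (cases g) (auto simp: close_def)
  have cx: "ed k x y \<le> c" using Cons.prems(2) g unfolding close_def by force
  have crf: "close k c rf rg"
    using Cons.prems(2) g unfolding close_def by (auto) (metis Suc_less_eq nth_Cons_Suc)
  define fd where "fd = dagger_rev (Suc p) rf"
  define fd2 where "fd2 = dagger_rev (Suc p) rg"
  have cfd: "close k c fd fd2" unfolding fd_def fd2_def by (rule Cons.IH[OF Cons.prems(1) crf])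
  define h where "h = seqc [x] (idt (Suc p) @ fd)"
  define h2 where "h2 = seqc [y] (idt (Suc p) @ fd2)"
  have ch: "close k c h h2" unfolding h_def h2_def
    by (intro close_seqc close_append close_idt Cons.prems(1) cfd) (simp add: close_single cx)
  then have ch1: "ed k (hd h) (hd h2) \<le> c" by (simp add: close_def h_def h2_def seqc_def)
  define hd1 where "hd1 = [Mu p (hd h)]"
  define hd2 where "hd2 = [Mu p (hd h2)]"
  have chd: "close k c hd1 hd2" unfolding hd1_def hd2_def close_single
    by (rule ed_Mu[OF Cons.prems(1) ch1])
  have "close k c (seqc fd (idt p @ hd1) @ hd1) (seqc fd2 (idt p @ hd2) @ hd2)"
    by (intro close_append close_seqc close_idt Cons.prems(1) cfd chd)
  then show ?case
    by (simp add: g Let_def fd_def fd2_def h_def h2_def hd1_def hd2_def)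
qed

theorem mainTheorem20:
  fixes f g :: "'a exp list" and n p :: nat
  assumes "f \<in> RegBeh n (p + n)" and "g \<in> RegBeh n (p + n)"
  shows "dRB n p (dagger p f) (dagger p g) \<le> dRB n (p + n) f g"
proof -
  have lf: "length f = n" and lg: "length g = n" using assms by (auto simp: RegBeh_def)
  define c where "c = dRB n (p + n) f g"
  let ?S = "(\<lambda>i. bd (abs_beh (f ! i)) (abs_beh (g ! i))) ` {..<n}"
  have c0: "0 \<le> c" unfolding c_def dRB_def by (rule Max_ge) auto
  have ci: "bd (abs_beh (f ! i)) (abs_beh (g ! i)) \<le> c" if "i < n" for i
    unfolding c_def dRB_def using that by (intro Max_ge) auto
  have cl: "close k c (rev f) (rev g)" for k
    unfolding close_def
  proof (intro conjI allI impI)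
    show "length (rev f) = length (rev g)" using lf lg by simp
    fix i assume i: "i < length (rev f)"
    then have "n - Suc i < n" using lf by simp
    then have "ed k (f ! (n - Suc i)) (g ! (n - Suc i)) \<le> c"
      using ed_le_bd[of k "f ! (n - Suc i)" "g ! (n - Suc i)"] ci by (meson order_trans)
    then show "ed k (rev f ! i) (rev g ! i) \<le> c" using i lf lg by (simp add: rev_nth)
  qed
  have cd: "close k c (dagger p f) (dagger p g)" for k
    unfolding dagger_def by (rule close_dagger_rev[OF c0 cl])
  have "bd (abs_beh (dagger p f ! i)) (abs_beh (dagger p g ! i)) \<le> c" if "i < n" for i
  proof (rule bd_le)
    fix k show "ed k (dagger p f ! i) (dagger p g ! i) \<le> c"
      using cd[of k] that lf by (simp add: close_def dagger_def)
  qed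
  then have "dRB n p (dagger p f) (dagger p g) \<le> c" unfolding dRB_def using c0
    by (subst Max_le_iff) auto
  then show ?thesis by (simp add: c_def)
qed

end
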